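(* If $a,b>0$ satisfy $ab=\frac56$ and $b\in[\frac73,\frac83]$, then the Gabor system $\mathcal{G}(B_2,a,b)=\{e^{2\pi i bm\cdot}B_2(\cdot-ak)\}_{k,m\in\mathbb{Z}}$ is not a frame for $L^2(\mathbb{R})$.
   Context: $B_2=\chi_{[-1/2,1/2]}*\chi_{[-1/2,1/2]}$, i.e. $B_2(x)=\max(1-|x|,0)$. *)

theory Defs
  imports "HOL-Analysis.Analysis"
begin

text \<open>The B-spline of order 2 (hat function):
  B_2 = chi_[-1/2,1/2] * chi_[-1/2,1/2], i.e. B_2(x) = max(1-|x|, 0).\<close>
definition B2 :: "real \<Rightarrow> real" where
  "B2 x = max (1 - \<bar>x\<bar>) 0"

definition L2 :: "(real \<Rightarrow> complex) set" where
  "L2 = {f. f \<in> borel_measurable lborel \<and> integrable lborel (\<lambda>x. (cmod (f x))\<^sup>2)}"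

definition L2_inner :: "(real \<Rightarrow> complex) \<Rightarrow> (real \<Rightarrow> complex) \<Rightarrow> complex" where
  "L2_inner f g = (LINT x|lborel. f x * cnj (g x))"

definition L2_norm_sq :: "(real \<Rightarrow> complex) \<Rightarrow> real" where
  "L2_norm_sq f = (LINT x|lborel. (cmod (f x))\<^sup>2)"

definition gabor_atom :: "(real \<Rightarrow> complex) \<Rightarrow> real \<Rightarrow> real \<Rightarrow> int \<Rightarrow> int \<Rightarrow> real \<Rightarrow> complex" where
  "gabor_atom g a b k m x = exp (2 * of_real pi * \<i> * of_real (b * of_int m * x)) * g (x - a * of_int k)"

definition is_frame :: "('j \<Rightarrow> real \<Rightarrow> complex) \<Rightarrow> bool" where
  "is_frame e \<longleftrightarrow> (\<exists>A B. 0 < A \<and> A \<le> B \<and>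
     (\<forall>f\<in>L2. (\<lambda>j. (cmod (L2_inner f (e j)))\<^sup>2) summable_on UNIV \<and>
        A * L2_norm_sq f \<le> (\<Sum>\<^sub>\<infinity>j. (cmod (L2_inner f (e j)))\<^sup>2) \<and>
        (\<Sum>\<^sub>\<infinity>j. (cmod (L2_inner f (e j)))\<^sup>2) \<le> B * L2_norm_sq f))"

definition gabor_frame :: "(real \<Rightarrow> complex) \<Rightarrow> real \<Rightarrow> real \<Rightarrow> bool" where
  "gabor_frame g a b = is_frame (\<lambda>(k::int, m::int). gabor_atom g a b k m)"

end

theory Submission
  imports Defs
begin


lemma B2_meas[measurable]: "B2 \<in> borel_measurable borel"
  unfolding B2_def by measurable

lemma B2_nonneg: "0 \<le> B2 x" by (simp add: B2_def)
lemma B2_le1: "B2 x \<le> 1" by (simp add: B2_def)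
lemma B2_lip: "\<bar>B2 x - B2 y\<bar> \<le> \<bar>x - y\<bar>" by (simp add: B2_def)
lemma B2_half: "\<bar>x\<bar> \<le> 1/2 \<Longrightarrow> B2 x \<ge> 1/2" by (simp add: B2_def)
lemma B2_zero: "\<bar>x\<bar> \<ge> 1 \<Longrightarrow> B2 x = 0" by (simp add: B2_def)
lemma B2_lin: "\<bar>x\<bar> \<le> 1 \<Longrightarrow> B2 x = 1 - \<bar>x\<bar>" by (simp add: B2_def)

definition EE :: "real \<Rightarrow> int \<Rightarrow> real \<Rightarrow> complex" where
  "EE b m x = exp (2 * of_real pi * \<i> * of_real (b * of_int m * x))"

lemma EE_meas[measurable]: "EE b m \<in> borel_measurable borel"
  unfolding EE_def by measurable

lemma norm_EE[simp]: "cmod (EE b m x) = 1"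
  unfolding EE_def by (simp add: norm_exp_eq_Re)

lemma norm_cnj_EE[simp]: "cmod (cnj (EE b m x)) = 1"
  by simp

lemma integrable_boxed:
  fixes r :: "real \<Rightarrow> complex"
  assumes "r \<in> borel_measurable lborel" "\<And>x. cmod (r x) \<le> K * indicator {lo..hi} x"
  shows "integrable lborel r"
proof (rule Bochner_Integration.integrable_bound[where f="\<lambda>x. K * indicator {lo..hi} x"])
  show "integrable lborel (\<lambda>x. K * indicator {lo..hi} x :: real)"
    by (intro integrable_mult_right integrable_real_indicator) (auto simp: emeasure_lborel_Icc_eq)
  show "AE x in lborel. norm (r x) \<le> norm (K * indicator {lo..hi} x :: real)"
    using assms(2) by (auto intro!: AE_I2 order_trans[OF _ abs_ge_self])
qed (use assms in \<open>auto simp: emeasure_lborel_Icc_eq\<close>)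

lemma integrable_boxed_sq:
  fixes r :: "real \<Rightarrow> complex"
  assumes "r \<in> borel_measurable lborel" "\<And>x. cmod (r x) \<le> K * indicator {lo..hi} x"
  shows "integrable lborel (\<lambda>x. (cmod (r x))\<^sup>2)"
proof (rule Bochner_Integration.integrable_bound[where f="\<lambda>x. K^2 * indicator {lo..hi} x"])
  show "integrable lborel (\<lambda>x. K^2 * indicator {lo..hi} x :: real)"
    by (intro integrable_mult_right integrable_real_indicator) (auto simp: emeasure_lborel_Icc_eq)
  show "AE x in lborel. norm ((cmod (r x))\<^sup>2) \<le> norm (K^2 * indicator {lo..hi} x :: real)"
  proof (intro AE_I2)
    fix x
    have "(cmod (r x))\<^sup>2 \<le> (K * indicator {lo..hi} x)^2"
      using assms(2)[of x] by (intro power_mono) auto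
    also have "\<dots> = K^2 * indicator {lo..hi} x" by (simp add: indicator_def)
    finally show "norm ((cmod (r x))\<^sup>2) \<le> norm (K^2 * indicator {lo..hi} x :: real)"
      by simp
  qed
qed (use assms in \<open>auto simp: emeasure_lborel_Icc_eq\<close>)

abbreviation GG :: "real \<Rightarrow> complex" where "GG \<equiv> (\<lambda>x. complex_of_real (B2 x))"

lemma crude_bessel:
  fixes r :: "real \<Rightarrow> complex"
  assumes a: "0 < a" "a \<le> 1/2" and B: "0 \<le> B"
  and UB: "\<And>f. f \<in> L2 \<Longrightarrow> (\<lambda>j. (cmod (L2_inner f ((\<lambda>(k::int,m::int). gabor_atom GG a b k m) j)))\<^sup>2) summable_on UNIV \<and>
      (\<Sum>\<^sub>\<infinity>j. (cmod (L2_inner f ((\<lambda>(k::int,m::int). gabor_atom GG a b k m) j)))\<^sup>2) \<le> B * L2_norm_sq f"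
  and r: "r \<in> borel_measurable lborel" "\<And>x. cmod (r x) \<le> K * indicator {lo..lo+1/2} x"
  and M: "finite M"
  shows "(\<Sum>m\<in>M. (cmod (L2_inner r (EE b m)))\<^sup>2) \<le> 4 * B * (LINT x|lborel. (cmod (r x))\<^sup>2)"
proof -
  define k' where "k' = \<lceil>lo / a\<rceil>"
  have "lo / a \<le> of_int k'" unfolding k'_def by (rule le_of_int_ceiling)
  then have k1: "lo \<le> a * k'" using a by (simp add: divide_le_eq mult.commute)
  have "of_int k' < lo / a + 1" unfolding k'_def using ceiling_correct[of "lo/a"] by linarith
  then have "a * k' < a * (lo / a + 1)" using a by simp
  then have k2: "a * k' < lo + a" using a by (simp add: distrib_left)
  have inI: "B2 (x - a * k') \<ge> 1/2" if "x \<in> {lo..lo+1/2}" for x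
  proof -
    have "-(1/2) \<le> x - a*k'" "x - a*k' \<le> 1/2" using that k1 k2 a by auto
    then show ?thesis by (intro B2_half abs_leI) linarith+
  qed
  define h where "h x = r x / GG (x - a * k')" for x
  have hmeas: "h \<in> borel_measurable lborel" unfolding h_def using r(1) by measurable
  have hb: "cmod (h x) \<le> 2 * cmod (r x)" for x
  proof (cases "x \<in> {lo..lo+1/2}")
    case True
    then have "B2 (x - a * k') \<ge> 1/2" by (rule inI)
    have "1 * cmod (r x) \<le> (2 * B2 (x - a * k')) * cmod (r x)"
      by (rule mult_right_mono) (use \<open>B2 (x - a * k') \<ge> 1/2\<close> in auto)
    moreover have "0 < B2 (x - a * k')" using \<open>B2 (x - a * k') \<ge> 1/2\<close> by linarith
    ultimately show ?thesis unfolding h_def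
      by (simp add: norm_divide pos_divide_le_eq mult_ac)
  next
    case False
    then have "r x = 0" using r(2)[of x] by simp
    then show ?thesis by (simp add: h_def)
  qed
  have rint: "integrable lborel (\<lambda>x. (cmod (r x))\<^sup>2)" by (rule integrable_boxed_sq[OF r])
  have hsq: "(cmod (h x))\<^sup>2 \<le> 4 * (cmod (r x))\<^sup>2" for x
  proof -
    have "(cmod (h x))\<^sup>2 \<le> (2 * cmod (r x))\<^sup>2" by (intro power_mono hb) auto
    then show ?thesis by (simp add: power_mult_distrib)
  qed
  have hint: "integrable lborel (\<lambda>x. (cmod (h x))\<^sup>2)"
    by (rule Bochner_Integration.integrable_bound[OF integrable_mult_right[OF rint, of 4]])
       (use hmeas hsq in auto)
  have hL2: "h \<in> L2" unfolding L2_def using hmeas hint by auto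
  have nh: "L2_norm_sq h \<le> 4 * (LINT x|lborel. (cmod (r x))\<^sup>2)"
    unfolding L2_norm_sq_def
    by (subst integral_mult_right_zero[symmetric], rule integral_mono[OF hint]) (use rint hsq in auto)
  have eq: "L2_inner r (EE b m) = L2_inner h (gabor_atom GG a b k' m)" for m
    unfolding L2_inner_def
  proof (rule Bochner_Integration.integral_cong[OF refl])
    fix x
    show "r x * cnj (EE b m x) = h x * cnj (gabor_atom GG a b k' m x)"
    proof (cases "x \<in> {lo..lo+1/2}")
      case True
      then have "B2 (x - a * k') \<noteq> 0" using inI[OF True] by auto
      then show ?thesis by (simp add: h_def gabor_atom_def EE_def)
    next
      case False
      then have "r x = 0" using r(2)[of x] by simp
      then show ?thesis by (simp add: h_def)
    qed
  qed
  let ?F = "\<lambda>j. (cmod (L2_inner h ((\<lambda>(k::int,m::int). gabor_atom GG a b k m) j)))\<^sup>2"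
  have "(\<Sum>m\<in>M. (cmod (L2_inner r (EE b m)))\<^sup>2) = (\<Sum>m\<in>M. ?F (k', m))"
    by (simp add: eq)
  also have "\<dots> = sum ?F ((\<lambda>m. (k', m)) ` M)"
    by (subst sum.reindex) (auto simp: inj_on_def)
  also have "\<dots> \<le> (\<Sum>\<^sub>\<infinity>j. ?F j)"
    by (rule finite_sum_le_infsum) (use UB[OF hL2] M in auto)
  also have "\<dots> \<le> B * L2_norm_sq h" using UB[OF hL2] by auto
  also have "\<dots> \<le> B * (4 * (LINT x|lborel. (cmod (r x))\<^sup>2))"
    by (rule mult_left_mono[OF nh B])
  finally show ?thesis by simp
qed



lemma cnj_EE: "cnj (EE b m x) = EE b (-m) x"
  unfolding EE_def by (simp add: exp_cnj)

lemma EE_cnj_meas[measurable]: "(\<lambda>x. cnj (EE b m x)) \<in> borel_measurable borel"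
  unfolding cnj_EE by measurable

lemma cs_sum:
  fixes u :: "int \<Rightarrow> complex" and c :: "int \<Rightarrow> real"
  assumes "\<And>j. \<bar>c j\<bar> \<le> 5"
  shows "(cmod (\<Sum>j\<in>T. c j * u j))\<^sup>2 \<le> 25 * real (card T) * (\<Sum>j\<in>T. (cmod (u j))\<^sup>2)"
proof -
  have "cmod (\<Sum>j\<in>T. c j * u j) \<le> (\<Sum>j\<in>T. \<bar>c j\<bar> * cmod (u j))"
    by (rule order_trans[OF norm_sum]) (simp add: norm_mult)
  then have "(cmod (\<Sum>j\<in>T. c j * u j))\<^sup>2 \<le> (\<Sum>j\<in>T. \<bar>c j\<bar> * cmod (u j))\<^sup>2"
    by (intro power_mono) auto
  also have "\<dots> \<le> (\<Sum>j\<in>T. (\<bar>c j\<bar> * cmod (u j))\<^sup>2) * card T"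
    by (rule sum_squared_le_sum_of_squares)
  also have "\<dots> \<le> (\<Sum>j\<in>T. 25 * (cmod (u j))\<^sup>2) * card T"
  proof (intro mult_right_mono sum_mono)
    fix j
    have "(\<bar>c j\<bar> * cmod (u j))\<^sup>2 = (\<bar>c j\<bar>)\<^sup>2 * (cmod (u j))\<^sup>2" by (simp add: power_mult_distrib)
    also have "\<dots> \<le> 5\<^sup>2 * (cmod (u j))\<^sup>2"
      by (intro mult_right_mono power_mono) (use assms[of j] in auto)
    finally show "(\<bar>c j\<bar> * cmod (u j))\<^sup>2 \<le> 25 * (cmod (u j))\<^sup>2" by simp
  qed auto
  finally show ?thesis by (simp add: sum_distrib_left mult_ac)
qed

lemma bump_sum_bound:
  fixes c :: "int \<Rightarrow> real" and \<rho> :: "int \<Rightarrow> real \<Rightarrow> complex"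
  assumes a: "0 < a" "a \<le> 1/2" and B: "0 \<le> B"
  and UB: "\<And>f. f \<in> L2 \<Longrightarrow> (\<lambda>j. (cmod (L2_inner f ((\<lambda>(k::int,m::int). gabor_atom GG a b k m) j)))\<^sup>2) summable_on UNIV \<and>
      (\<Sum>\<^sub>\<infinity>j. (cmod (L2_inner f ((\<lambda>(k::int,m::int). gabor_atom GG a b k m) j)))\<^sup>2) \<le> B * L2_norm_sq f"
  and c: "\<And>j. \<bar>c j\<bar> \<le> 5"
  and rho: "\<And>j. j \<in> T \<Longrightarrow> \<rho> j \<in> borel_measurable lborel"
     "\<And>j x. j \<in> T \<Longrightarrow> cmod (\<rho> j x) \<le> K * indicator {lo j..lo j+1/2} x"
     "\<And>j. j \<in> T \<Longrightarrow> (LINT x|lborel. (cmod (\<rho> j x))\<^sup>2) \<le> Q"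
  and M: "finite M"
  shows "(\<Sum>m\<in>M. (cmod (\<Sum>j\<in>T. c j * L2_inner (\<rho> j) (EE b m)))\<^sup>2) \<le> 25 * real (card T) * real (card T) * (4 * B * Q)"
proof -
  have "(\<Sum>m\<in>M. (cmod (\<Sum>j\<in>T. c j * L2_inner (\<rho> j) (EE b m)))\<^sup>2)
     \<le> (\<Sum>m\<in>M. 25 * real (card T) * (\<Sum>j\<in>T. (cmod (L2_inner (\<rho> j) (EE b m)))\<^sup>2))"
    by (intro sum_mono cs_sum c)
  also have "\<dots> = 25 * real (card T) * (\<Sum>j\<in>T. (\<Sum>m\<in>M. (cmod (L2_inner (\<rho> j) (EE b m)))\<^sup>2))"
    by (simp add: sum_distrib_left sum.swap[of _ M T])
  also have "\<dots> \<le> 25 * real (card T) * (\<Sum>j\<in>T. 4 * B * Q)"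
  proof (intro mult_left_mono sum_mono)
    fix j assume j: "j \<in> T"
    have "(\<Sum>m\<in>M. (cmod (L2_inner (\<rho> j) (EE b m)))\<^sup>2) \<le> 4 * B * (LINT x|lborel. (cmod (\<rho> j x))\<^sup>2)"
      by (rule crude_bessel[OF a B UB rho(1)[OF j] rho(2)[OF j] M])
    also have "\<dots> \<le> 4 * B * Q" using rho(3)[OF j] B by (intro mult_left_mono) auto
    finally show "(\<Sum>m\<in>M. (cmod (L2_inner (\<rho> j) (EE b m)))\<^sup>2) \<le> 4 * B * Q" .
  qed auto
  finally show ?thesis by simp
qed

lemma inner_sum:
  fixes c :: "int \<Rightarrow> complex" and \<rho> :: "int \<Rightarrow> real \<Rightarrow> complex"
  assumes "finite T"
  and rho: "\<And>j. j \<in> T \<Longrightarrow> \<rho> j \<in> borel_measurable lborel"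
     "\<And>j x. j \<in> T \<Longrightarrow> cmod (\<rho> j x) \<le> K * indicator {lo j..hi j} x"
  shows "L2_inner (\<lambda>x. \<Sum>j\<in>T. c j * \<rho> j x) (EE b m) = (\<Sum>j\<in>T. c j * L2_inner (\<rho> j) (EE b m))"
proof -
  have int: "integrable lborel (\<lambda>x. \<rho> j x * cnj (EE b m x))" if "j \<in> T" for j
  proof (rule integrable_boxed[where K=K and lo="lo j" and hi="hi j"])
    have [measurable]: "\<rho> j \<in> borel_measurable borel" using rho(1)[OF that] by simp
    show "(\<lambda>x. \<rho> j x * cnj (EE b m x)) \<in> borel_measurable lborel" by measurable
  qed (use rho[OF that] in \<open>auto simp: norm_mult\<close>)
  have "L2_inner (\<lambda>x. \<Sum>j\<in>T. c j * \<rho> j x) (EE b m) = (LINT x|lborel. (\<Sum>j\<in>T. c j * (\<rho> j x * cnj (EE b m x))))"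
    unfolding L2_inner_def by (intro Bochner_Integration.integral_cong refl) (simp add: sum_distrib_left mult.left_commute mult.commute)
  also have "\<dots> = (\<Sum>j\<in>T. (LINT x|lborel. c j * (\<rho> j x * cnj (EE b m x))))"
    by (subst Bochner_Integration.integral_sum) (use int in \<open>auto intro: integrable_mult_right\<close>)
  also have "\<dots> = (\<Sum>j\<in>T. c j * L2_inner (\<rho> j) (EE b m))"
    unfolding L2_inner_def by simp
  finally show ?thesis .
qed

lemma inner_shift:
  "L2_inner (\<lambda>x. \<phi> (x - c)) (EE b m) = cnj (EE b m c) * L2_inner \<phi> (EE b m)"
proof -
  have "L2_inner (\<lambda>x. \<phi> (x - c)) (EE b m) = (LINT x|lborel. \<phi> (c + x - c) * cnj (EE b m (c + x)))"
    unfolding L2_inner_def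
    using lborel_integral_real_affine[of 1 "\<lambda>x. \<phi> (x - c) * cnj (EE b m x)" c] by simp
  also have "\<dots> = (LINT x|lborel. cnj (EE b m c) * (\<phi> x * cnj (EE b m x)))"
    by (rule Bochner_Integration.integral_cong) (auto simp: EE_def distrib_left distrib_right exp_add mult_ac)
  also have "\<dots> = cnj (EE b m c) * L2_inner \<phi> (EE b m)"
    unfolding L2_inner_def by simp
  finally show ?thesis .
qed



definition Vv :: "int \<Rightarrow> real" where
  "Vv j = (if j mod 5 = 0 then 0 else if j mod 5 = 1 then -3 else if j mod 5 = 2 then 5
           else if j mod 5 = 3 then -5 else 3)"

lemma Vv_bound: "\<bar>Vv j\<bar> \<le> 5" by (simp add: Vv_def)

lemma Vv_periodic: "Vv (j + 5 * k) = Vv j" by (simp add: Vv_def)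

definition WW :: "int \<Rightarrow> int \<Rightarrow> complex" where
  "WW m q = exp (2 * of_real pi * \<i> * of_int (m * q) / 6)"

lemma WW_add: "WW m (q + 6 * n) = WW m q"
proof -
  have e: "2 * of_real pi * \<i> * of_int (m * (q + 6 * n)) / 6
      = 2 * of_real pi * \<i> * of_int (m * q) / 6 + (2 * of_int (m * n) * of_real pi) * \<i>"
    by (simp add: field_simps)
  have "exp ((2 * of_int (m * n) * of_real pi) * \<i>) = 1"
    using exp_integer_2pi[of "of_int (m * n)"] by simp
  then show ?thesis unfolding WW_def e exp_add by simp
qed

lemma WW_mod: "WW m q = WW m (q mod 6)"
  using WW_add[of m "q mod 6" "q div 6"] by (simp add: add.commute)

definition lin :: "real \<Rightarrow> int \<Rightarrow> real" where
  "lin d q = (if \<bar>q\<bar> \<le> 14 then 1 - \<bar>q\<bar> * d else 0)"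

lemma term_rewrite:
  assumes d: "1/16 \<le> d" "d \<le> 1/14" and q: "q \<in> {-16..16}"
  shows "complex_of_real (Vv q * B2 (real_of_int q * d)) * WW m q
       = complex_of_real (Vv q * lin d q) * WW m (q mod 6)"
proof -
  have "Vv q * B2 (real_of_int q * d) = Vv q * lin d q"
  proof (cases "\<bar>q\<bar> \<le> 14")
    case True
    have "\<bar>real_of_int q * d\<bar> = \<bar>q\<bar> * d" using d by (simp add: abs_mult)
    moreover have "\<bar>real_of_int q\<bar> * d \<le> 14 * (1/14)"
      by (rule mult_mono) (use True d in auto)
    ultimately show ?thesis using True by (simp add: B2_lin lin_def)
  next
    case False
    then have "\<bar>q\<bar> = 15 \<or> \<bar>q\<bar> = 16" using q by auto
    then show ?thesis
    proof
      assume "\<bar>q\<bar> = 15"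
      then have "q = 15 \<or> q = -15" by auto
      then have "Vv q = 0" by (auto simp: Vv_def)
      then show ?thesis by simp
    next
      assume h: "\<bar>q\<bar> = 16"
      have "\<bar>real_of_int q * d\<bar> = \<bar>q\<bar> * d" using d by (simp add: abs_mult)
      also have "\<dots> = 16 * d" using h by simp
      finally have "B2 (real_of_int q * d) = 0" using d by (intro B2_zero) simp
      then show ?thesis using h by (simp add: lin_def)
    qed
  qed
  then show ?thesis using WW_mod[of m q] by simp
qed

lemma int_range: "{-16..16::int} = {-16,-15,-14,-13,-12,-11,-10,-9,-8,-7,-6,-5,-4,-3,-2,-1,0,1,2,3,4,5,6,7,8,9,10,11,12,13,14,15,16}"
  apply auto
  apply presburger
  done

lemma main_identity:
  assumes d: "1/16 \<le> d" "d \<le> 1/14"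
  shows "(\<Sum>q\<in>{-16..16::int}. complex_of_real (Vv q * B2 (real_of_int q * d)) * WW m q) = 0"
proof -
  have "(\<Sum>q\<in>{-16..16::int}. complex_of_real (Vv q * B2 (real_of_int q * d)) * WW m q)
      = (\<Sum>q\<in>{-16..16::int}. complex_of_real (Vv q * lin d q) * WW m (q mod 6))"
    by (rule sum.cong[OF refl]) (rule term_rewrite[OF d])
  also have "\<dots> = 0"
    unfolding int_range by (simp add: Vv_def lin_def algebra_simps)
  finally show ?thesis .
qed



definition phi :: "real \<Rightarrow> real \<Rightarrow> int \<Rightarrow> real \<Rightarrow> real" where
  "phi d \<delta> j x = indicator {real_of_int j * d .. real_of_int j * d + \<delta> * d} x"

definition ff :: "real \<Rightarrow> real \<Rightarrow> nat \<Rightarrow> real \<Rightarrow> complex" where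
  "ff d \<delta> L x = (\<Sum>j\<in>{0..<5 * int L}. complex_of_real (Vv j * phi d \<delta> j x))"

lemma phi_meas[measurable]: "phi d \<delta> j \<in> borel_measurable borel"
  unfolding phi_def by measurable

lemma phi_01: "phi d \<delta> j x = 0 \<or> phi d \<delta> j x = 1" by (simp add: phi_def indicator_def)
lemma phi_nonneg: "0 \<le> phi d \<delta> j x" by (simp add: phi_def)
lemma phi_le1: "phi d \<delta> j x \<le> 1" by (simp add: phi_def)

lemma phi_disj:
  assumes d: "0 < d" and \<delta>: "0 < \<delta>" "\<delta> < 1"
  and "phi d \<delta> j x \<noteq> 0" "phi d \<delta> j' x \<noteq> 0"
  shows "j = j'"
proof -
  have 1: "real_of_int j * d \<le> x" "x \<le> real_of_int j * d + \<delta> * d"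
   and 2: "real_of_int j' * d \<le> x" "x \<le> real_of_int j' * d + \<delta> * d"
    using assms(4,5) by (auto simp: phi_def indicator_def split: if_splits)
  have "\<delta> * d < 1 * d" using d \<delta> by (intro mult_strict_right_mono) auto
  then have "real_of_int j * d < (real_of_int j' + 1) * d" "real_of_int j' * d < (real_of_int j + 1) * d"
    using 1 2 by (auto simp: distrib_right)
  then have "real_of_int j < real_of_int j' + 1" "real_of_int j' < real_of_int j + 1"
    using d by (auto simp: mult_less_cancel_right)
  then show ?thesis by linarith
qed

lemma phi_shift: "phi d \<delta> j x = phi d \<delta> 0 (x - real_of_int j * d)"
  by (auto simp: phi_def indicator_def)

lemma integral_phi: "0 \<le> \<delta> \<Longrightarrow> 0 \<le> d \<Longrightarrow> (LINT x|lborel. phi d \<delta> j x) = \<delta> * d"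
  unfolding phi_def by simp

lemma integrable_phi: "integrable lborel (phi d \<delta> j)"
  unfolding phi_def by (intro integrable_real_indicator) (auto simp: emeasure_lborel_Icc_eq)

lemma ff_meas[measurable]: "ff d \<delta> L \<in> borel_measurable borel"
  unfolding ff_def by measurable

lemma sum_single_nz:
  assumes "finite A" "x \<in> A" "\<And>y. y \<in> A \<Longrightarrow> y \<noteq> x \<Longrightarrow> f y = 0"
  shows "sum f A = f x"
proof -
  have "sum f A = f x + sum f (A - {x})" by (rule sum.remove) (use assms in auto)
  also have "sum f (A - {x}) = 0" by (rule sum.neutral) (use assms in auto)
  finally show ?thesis by simp
qed

lemma ff_sq:
  assumes d: "0 < d" and \<delta>: "0 < \<delta>" "\<delta> < 1"
  shows "(cmod (ff d \<delta> L x))\<^sup>2 = (\<Sum>j\<in>{0..<5 * int L}. (Vv j)\<^sup>2 * phi d \<delta> j x)"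
proof (cases "\<exists>j\<in>{0..<5 * int L}. phi d \<delta> j x \<noteq> 0")
  case True
  then obtain j0 where j0: "j0 \<in> {0..<5 * int L}" "phi d \<delta> j0 x \<noteq> 0" by blast
  have others: "phi d \<delta> j x = 0" if "j \<noteq> j0" for j
    using phi_disj[OF d \<delta> _ j0(2), of j] that by auto
  have p1: "phi d \<delta> j0 x = 1" using j0(2) phi_01 by blast
  have "ff d \<delta> L x = complex_of_real (Vv j0 * phi d \<delta> j0 x)"
    unfolding ff_def by (rule sum_single_nz) (use others j0 in auto)
  moreover have "(\<Sum>j\<in>{0..<5 * int L}. (Vv j)\<^sup>2 * phi d \<delta> j x) = (Vv j0)\<^sup>2 * phi d \<delta> j0 x"
    by (rule sum_single_nz) (use others j0 in auto)
  ultimately show ?thesis using p1 by simp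
next
  case False
  then have "ff d \<delta> L x = 0" unfolding ff_def by (intro sum.neutral) auto
  moreover have "(\<Sum>j\<in>{0..<5 * int L}. (Vv j)\<^sup>2 * phi d \<delta> j x) = 0"
    using False by (intro sum.neutral) auto
  ultimately show ?thesis by simp
qed

lemma sum_Vv_sq: "(\<Sum>j\<in>{0..<5 * int L}. (Vv j)\<^sup>2) = 68 * real L"
proof (induction L)
  case 0
  then show ?case by simp
next
  case (Suc L)
  have split: "{0..<5 * int (Suc L)} = {0..<5 * int L} \<union> {5 * int L..<5 * int L + 5}" by auto
  have set5: "{5 * int L..<5 * int L + 5} = {5 * int L, 5 * int L + 1, 5 * int L + 2, 5 * int L + 3, 5 * int L + 4}"
    by auto
  have V: "Vv (i + 5 * int L) = Vv i" for i using Vv_periodic[of i "int L"] .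
  have "(\<Sum>j\<in>{5 * int L..<5 * int L + 5}. (Vv j)\<^sup>2) = 68"
    unfolding set5 using V[of 0] V[of 1] V[of 2] V[of 3] V[of 4]
    by (simp add: Vv_def add.commute)
  moreover have "(\<Sum>j\<in>{0..<5 * int L} \<union> {5 * int L..<5 * int L + 5}. (Vv j)\<^sup>2)
     = (\<Sum>j\<in>{0..<5 * int L}. (Vv j)\<^sup>2) + (\<Sum>j\<in>{5 * int L..<5 * int L + 5}. (Vv j)\<^sup>2)"
    by (rule sum.union_disjoint) auto
  ultimately have "(\<Sum>j\<in>{0..<5 * int (Suc L)}. (Vv j)\<^sup>2) = 68 * real L + 68"
    unfolding split using Suc.IH by simp
  then show ?case by simp
qed

lemma ff_L2:
  assumes d: "0 < d" and \<delta>: "0 < \<delta>" "\<delta> < 1"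
  shows "ff d \<delta> L \<in> L2" and "L2_norm_sq (ff d \<delta> L) = 68 * real L * (\<delta> * d)"
proof -
  have int: "integrable lborel (\<lambda>x. \<Sum>j\<in>{0..<5 * int L}. (Vv j)\<^sup>2 * phi d \<delta> j x)"
    by (intro Bochner_Integration.integrable_sum integrable_mult_right integrable_phi)
  then show "ff d \<delta> L \<in> L2" unfolding L2_def using ff_sq[OF d \<delta>] by simp
  have "L2_norm_sq (ff d \<delta> L) = (LINT x|lborel. (\<Sum>j\<in>{0..<5 * int L}. (Vv j)\<^sup>2 * phi d \<delta> j x))"
    unfolding L2_norm_sq_def using ff_sq[OF d \<delta>] by simp
  also have "\<dots> = (\<Sum>j\<in>{0..<5 * int L}. (Vv j)\<^sup>2 * (\<delta> * d))"
    by (subst Bochner_Integration.integral_sum)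
       (use d \<delta> in \<open>auto intro!: integrable_mult_right integrable_phi simp: integral_phi\<close>)
  also have "\<dots> = 68 * real L * (\<delta> * d)" by (simp add: sum_distrib_right[symmetric] sum_Vv_sq)
  finally show "L2_norm_sq (ff d \<delta> L) = 68 * real L * (\<delta> * d)" .
qed



context
  fixes a b d \<delta> :: real and L :: nat
  assumes a: "a = 5 * d" and bd: "b * d = 1/6" and d1: "1/16 \<le> d" and d2: "d \<le> 1/14"
    and \<delta>1: "0 < \<delta>" and \<delta>2: "\<delta> \<le> 1/2"
  fixes B :: real
  assumes B: "0 \<le> B"
  and UB: "\<And>f. f \<in> L2 \<Longrightarrow> (\<lambda>j. (cmod (L2_inner f ((\<lambda>(k::int,m::int). gabor_atom GG a b k m) j)))\<^sup>2) summable_on UNIV \<and>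
      (\<Sum>\<^sub>\<infinity>j. (cmod (L2_inner f ((\<lambda>(k::int,m::int). gabor_atom GG a b k m) j)))\<^sup>2) \<le> B * L2_norm_sq f"
begin

lemma far_zero:
  assumes "phi d \<delta> j x \<noteq> 0" "j \<notin> {5*k-16..5*k+16}"
  shows "B2 (x - a * real_of_int k) = 0"
proof -
  have x: "real_of_int j * d \<le> x" "x \<le> real_of_int j * d + \<delta> * d"
    using assms(1) by (auto simp: phi_def indicator_def split: if_splits)
  have dd: "\<delta> * d \<le> d / 2" using \<delta>2 d1 by (simp add: mult_right_mono)
  from assms(2) have "j \<ge> 5*k+17 \<or> j \<le> 5*k-17" by auto
  then show ?thesis
  proof
    assume "j \<ge> 5*k+17"
    then have "real_of_int j \<ge> 5 * real_of_int k + 17" by linarith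
    then have "real_of_int j * d \<ge> (5 * real_of_int k + 17) * d" using d1 by (intro mult_right_mono) auto
    then have "x - a * real_of_int k \<ge> 17 * d" using x a by (simp add: algebra_simps)
    then show ?thesis using d1 by (intro B2_zero) linarith
  next
    assume "j \<le> 5*k-17"
    then have "real_of_int j \<le> 5 * real_of_int k - 17" by linarith
    then have "real_of_int j * d \<le> (5 * real_of_int k - 17) * d" using d1 by (intro mult_right_mono) auto
    then have "x - a * real_of_int k \<le> -17 * d + d / 2" using x a dd by (simp add: algebra_simps)
    then show ?thesis using d1 by (intro B2_zero) linarith
  qed
qed

definition Jk :: "int \<Rightarrow> int set" where
  "Jk k = {0..<5 * int L} \<inter> {5*k-16..5*k+16}"

lemma Jk_fin: "finite (Jk k)" by (simp add: Jk_def)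

lemma Jk_card: "card (Jk k) \<le> 33"
proof -
  have "card (Jk k) \<le> card {5*k-16..5*k+16}" unfolding Jk_def by (intro card_mono) auto
  also have "\<dots> = 33" by simp
  finally show ?thesis .
qed

lemma inner_eq:
  "L2_inner (ff d \<delta> L) (gabor_atom GG a b k m)
   = L2_inner (\<lambda>x. \<Sum>j\<in>Jk k. complex_of_real (Vv j) * complex_of_real (phi d \<delta> j x * B2 (x - a * real_of_int k))) (EE b m)"
  unfolding L2_inner_def
proof (rule Bochner_Integration.integral_cong[OF refl])
  fix x
  have "ff d \<delta> L x * GG (x - a * real_of_int k)
     = (\<Sum>j\<in>{0..<5 * int L}. complex_of_real (Vv j) * complex_of_real (phi d \<delta> j x * B2 (x - a * real_of_int k)))"
    unfolding ff_def sum_distrib_right by (intro sum.cong refl) simp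
  also have "\<dots> = (\<Sum>j\<in>Jk k. complex_of_real (Vv j) * complex_of_real (phi d \<delta> j x * B2 (x - a * real_of_int k)))"
  proof (rule sum.mono_neutral_cong_right)
    show "\<forall>j\<in>{0..<5 * int L} - Jk k. complex_of_real (Vv j) * complex_of_real (phi d \<delta> j x * B2 (x - a * real_of_int k)) = 0"
    proof
      fix j assume j: "j \<in> {0..<5 * int L} - Jk k"
      show "complex_of_real (Vv j) * complex_of_real (phi d \<delta> j x * B2 (x - a * real_of_int k)) = 0"
      proof (cases "phi d \<delta> j x = 0")
        case False
        have "j \<notin> {5*k-16..5*k+16}" using j by (auto simp: Jk_def)
        then show ?thesis using far_zero[OF False] by simp
      qed simp
    qed
  qed (auto simp: Jk_def)
  finally have eq: "ff d \<delta> L x * GG (x - a * real_of_int k) = (\<Sum>j\<in>Jk k. complex_of_real (Vv j) * complex_of_real (phi d \<delta> j x * B2 (x - a * real_of_int k)))" .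
  show "ff d \<delta> L x * cnj (gabor_atom GG a b k m x)
     = (\<Sum>j\<in>Jk k. complex_of_real (Vv j) * complex_of_real (phi d \<delta> j x * B2 (x - a * real_of_int k))) * cnj (EE b m x)"
    unfolding eq[symmetric] by (simp add: gabor_atom_def EE_def mult_ac)
qed

lemma WW_add2: "WW m (q + p) = WW m q * WW m p"
  unfolding WW_def by (simp add: distrib_left distrib_right add_divide_distrib exp_add)

lemma EE_grid: "EE b m (real_of_int j * d) = WW m j"
proof -
  have "b * real_of_int m * (real_of_int j * d) = real_of_int (m * j) / 6"
    using bd by (simp add: field_simps)
  then have e: "complex_of_real (b * real_of_int m * (real_of_int j * d)) = of_int (m * j) / 6"
    by (metis of_real_divide of_real_numeral of_real_of_int_eq)
  show ?thesis unfolding EE_def WW_def e by (simp add: times_divide_eq_right)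
qed

lemma a_pos: "0 < a" using a d1 by simp
lemma a_half: "a \<le> 1/2" using a d2 by simp
lemma dd_half: "\<delta> * d \<le> 1/2"
proof -
  have "\<delta> * d \<le> (1/2) * (1/14)" using \<delta>1 \<delta>2 d1 d2 by (intro mult_mono) auto
  then show ?thesis by simp
qed

lemma phi_box: "phi d \<delta> j x \<le> indicator {real_of_int j * d .. real_of_int j * d + 1/2} x"
  using dd_half by (auto simp: phi_def indicator_def)

lemma card_bound:
  assumes "0 \<le> X"
  shows "25 * real (card (Jk k)) * real (card (Jk k)) * X \<le> 25 * 33 * 33 * X"
proof -
  have c: "real (card (Jk k)) \<le> 33" using Jk_card[of k] by simp
  have "real (card (Jk k)) * real (card (Jk k)) \<le> 33 * 33" by (intro mult_mono c) auto
  then have "real (card (Jk k)) * real (card (Jk k)) * X \<le> (33 * 33) * X" by (rule mult_right_mono[OF _ assms])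
  then have "25 * (real (card (Jk k)) * real (card (Jk k)) * X) \<le> 25 * ((33 * 33) * X)" by (rule mult_left_mono) simp
  then show ?thesis by (simp only: mult.assoc)
qed

lemma general_bound:
  assumes M: "finite M"
  shows "(\<Sum>m\<in>M. (cmod (L2_inner (ff d \<delta> L) (gabor_atom GG a b k m)))\<^sup>2) \<le> 25 * 33 * 33 * (4 * B * (\<delta> * d))"
proof -
  define \<rho> where "\<rho> j x = complex_of_real (phi d \<delta> j x * B2 (x - a * real_of_int k))" for j x
  have rm: "\<rho> j \<in> borel_measurable lborel" for j unfolding \<rho>_def by measurable
  have rb: "cmod (\<rho> j x) \<le> 1 * indicator {real_of_int j * d .. real_of_int j * d + 1/2} x" for j x
  proof -
    have "cmod (\<rho> j x) = phi d \<delta> j x * B2 (x - a * real_of_int k)"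
      unfolding \<rho>_def norm_of_real by (intro abs_of_nonneg mult_nonneg_nonneg phi_nonneg B2_nonneg)
    also have "\<dots> \<le> phi d \<delta> j x * 1" by (intro mult_left_mono B2_le1 phi_nonneg)
    finally show ?thesis using phi_box[of j x] by simp
  qed
  have rsq: "(LINT x|lborel. (cmod (\<rho> j x))\<^sup>2) \<le> \<delta> * d" for j
  proof -
    have pt: "(cmod (\<rho> j x))\<^sup>2 \<le> phi d \<delta> j x" for x
    proof -
      have "cmod (\<rho> j x) = phi d \<delta> j x * B2 (x - a * real_of_int k)"
        unfolding \<rho>_def norm_of_real by (intro abs_of_nonneg mult_nonneg_nonneg phi_nonneg B2_nonneg)
      moreover have "phi d \<delta> j x * B2 (x - a * real_of_int k) \<le> 1"
        using phi_le1 B2_le1 phi_nonneg B2_nonneg by (simp add: mult_le_one)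
      moreover have "(phi d \<delta> j x * B2 (x - a * real_of_int k))\<^sup>2 \<le> phi d \<delta> j x"
        using phi_01[of d \<delta> j x] B2_le1 B2_nonneg
        by (auto simp: power2_eq_square mult_le_one)
      ultimately show ?thesis by simp
    qed
    have "(LINT x|lborel. (cmod (\<rho> j x))\<^sup>2) \<le> (LINT x|lborel. phi d \<delta> j x)"
      by (rule integral_mono[OF integrable_boxed_sq[OF rm rb] integrable_phi pt])
    also have "\<dots> = \<delta> * d" using \<delta>1 d1 by (simp add: integral_phi)
    finally show ?thesis .
  qed
  have "(\<Sum>m\<in>M. (cmod (L2_inner (ff d \<delta> L) (gabor_atom GG a b k m)))\<^sup>2)
      = (\<Sum>m\<in>M. (cmod (\<Sum>j\<in>Jk k. complex_of_real (Vv j) * L2_inner (\<rho> j) (EE b m)))\<^sup>2)"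
  proof (rule sum.cong[OF refl])
    fix m
    show "(cmod (L2_inner (ff d \<delta> L) (gabor_atom GG a b k m)))\<^sup>2 = (cmod (\<Sum>j\<in>Jk k. complex_of_real (Vv j) * L2_inner (\<rho> j) (EE b m)))\<^sup>2"
      unfolding inner_eq using inner_sum[OF Jk_fin, where \<rho>=\<rho> and K=1 and lo="\<lambda>j. real_of_int j * d" and hi="\<lambda>j. real_of_int j * d + 1/2" and c="\<lambda>j. complex_of_real (Vv j)" and b=b and m=m] rm rb
      unfolding \<rho>_def by simp
  qed
  also have "\<dots> \<le> 25 * real (card (Jk k)) * real (card (Jk k)) * (4 * B * (\<delta> * d))"
    by (rule bump_sum_bound[OF a_pos a_half B UB Vv_bound rm rb rsq M])
  also have "\<dots> \<le> 25 * 33 * 33 * (4 * B * (\<delta> * d))"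
    by (rule card_bound) (use B \<delta>1 d1 in simp)
  finally show ?thesis .
qed

lemma int_sum_box:
  fixes c :: "int \<Rightarrow> complex" and \<rho> :: "int \<Rightarrow> real \<Rightarrow> complex"
  assumes "finite T"
  and rho: "\<And>j. j \<in> T \<Longrightarrow> \<rho> j \<in> borel_measurable lborel"
     "\<And>j x. j \<in> T \<Longrightarrow> cmod (\<rho> j x) \<le> K * indicator {lo j..hi j} x"
  shows "integrable lborel (\<lambda>x. (\<Sum>j\<in>T. c j * \<rho> j x) * cnj (EE bb m x))"
proof -
  have int: "integrable lborel (\<lambda>x. \<rho> j x * cnj (EE bb m x))" if "j \<in> T" for j
  proof (rule integrable_boxed[where K=K and lo="lo j" and hi="hi j"])
    have [measurable]: "\<rho> j \<in> borel_measurable borel" using rho(1)[OF that] by simp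
    show "(\<lambda>x. \<rho> j x * cnj (EE bb m x)) \<in> borel_measurable lborel" by measurable
  qed (use rho[OF that] in \<open>auto simp: norm_mult\<close>)
  have "integrable lborel (\<lambda>x. \<Sum>j\<in>T. c j * (\<rho> j x * cnj (EE bb m x)))"
    by (intro Bochner_Integration.integrable_sum integrable_mult_right int)
  moreover have "(\<lambda>x. (\<Sum>j\<in>T. c j * \<rho> j x) * cnj (EE bb m x)) = (\<lambda>x. \<Sum>j\<in>T. c j * (\<rho> j x * cnj (EE bb m x)))"
    by (simp add: sum_distrib_right mult.assoc)
  ultimately show ?thesis by simp
qed

lemma inner_add:
  assumes "integrable lborel (\<lambda>x. f x * cnj (e x))" "integrable lborel (\<lambda>x. g x * cnj (e x))"
  shows "L2_inner (\<lambda>x. f x + g x) e = L2_inner f e + L2_inner g e"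
  unfolding L2_inner_def using assms by (simp add: distrib_right)

lemma main_vanish:
  assumes "16 \<le> 5*k"
  shows "(\<Sum>j\<in>{5*k-16..5*k+16}. complex_of_real (Vv j * B2 (real_of_int (j - 5*k) * d)) * WW m j) = 0"
proof -
  have set: "{5*k-16..5*k+16} = (\<lambda>q. q + 5*k) ` {-16..16}" by simp
  have "(\<Sum>j\<in>{5*k-16..5*k+16}. complex_of_real (Vv j * B2 (real_of_int (j - 5*k) * d)) * WW m j)
      = (\<Sum>q\<in>{-16..16}. complex_of_real (Vv (q + 5*k) * B2 (real_of_int q * d)) * WW m (q + 5*k))"
    unfolding set by (subst sum.reindex) (auto simp: inj_on_def)
  also have "\<dots> = WW m (5*k) * (\<Sum>q\<in>{-16..16::int}. complex_of_real (Vv q * B2 (real_of_int q * d)) * WW m q)"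
    using Vv_periodic[of _ k] by (simp add: sum_distrib_left WW_add2 mult_ac)
  also have "\<dots> = 0" using main_identity[OF d1 d2] by simp
  finally show ?thesis .
qed

lemma interior_bound:
  assumes M: "finite M" and k1: "16 \<le> 5*k" and k2: "5*k+16 < 5 * int L"
  shows "(\<Sum>m\<in>M. (cmod (L2_inner (ff d \<delta> L) (gabor_atom GG a b k m)))\<^sup>2) \<le> 25 * 33 * 33 * (4 * B * ((\<delta> * d)^3))"
proof -
  have J: "Jk k = {5*k-16..5*k+16}" unfolding Jk_def using k1 k2 by auto
  define u where "u j x = complex_of_real (phi d \<delta> j x)" for j x
  define \<psi> where "\<psi> j x = complex_of_real (phi d \<delta> j x * (B2 (x - a * real_of_int k) - B2 (real_of_int (j - 5*k) * d)))" for j x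
  define cm where "cm j = complex_of_real (Vv j * B2 (real_of_int (j - 5*k) * d))" for j
  have um: "u j \<in> borel_measurable lborel" for j unfolding u_def by measurable
  have ub: "cmod (u j x) \<le> 1 * indicator {real_of_int j * d .. real_of_int j * d + 1/2} x" for j x
    unfolding u_def using phi_box[of j x] phi_nonneg[of d \<delta> j x] by simp
  have pm: "\<psi> j \<in> borel_measurable lborel" for j unfolding \<psi>_def by measurable
  have pb0: "cmod (\<psi> j x) \<le> (\<delta> * d) * phi d \<delta> j x" for j x
  proof (cases "phi d \<delta> j x = 0")
    case True then show ?thesis by (simp add: \<psi>_def)
  next
    case False
    then have p1: "phi d \<delta> j x = 1" using phi_01 by blast
    then have x: "real_of_int j * d \<le> x" "x \<le> real_of_int j * d + \<delta> * d"
      by (auto simp: phi_def indicator_def split: if_splits)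
    have "\<bar>B2 (x - a * real_of_int k) - B2 (real_of_int (j - 5*k) * d)\<bar>
        \<le> \<bar>(x - a * real_of_int k) - real_of_int (j - 5*k) * d\<bar>" by (rule B2_lip)
    also have "(x - a * real_of_int k) - real_of_int (j - 5*k) * d = x - real_of_int j * d"
      using a by (simp add: algebra_simps)
    also have "\<bar>x - real_of_int j * d\<bar> \<le> \<delta> * d" using x by simp
    finally show ?thesis using p1 unfolding \<psi>_def norm_of_real by simp
  qed
  have pb: "cmod (\<psi> j x) \<le> 1 * indicator {real_of_int j * d .. real_of_int j * d + 1/2} x" for j x
  proof -
    have "(\<delta> * d) * phi d \<delta> j x \<le> 1 * phi d \<delta> j x"
      using dd_half phi_nonneg[of d \<delta> j x] by (intro mult_right_mono) auto
    then show ?thesis using pb0[of j x] phi_box[of j x] by simp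
  qed
  have psq: "(LINT x|lborel. (cmod (\<psi> j x))\<^sup>2) \<le> (\<delta> * d)^3" for j
  proof -
    have pt: "(cmod (\<psi> j x))\<^sup>2 \<le> (\<delta> * d)^2 * phi d \<delta> j x" for x
    proof -
      have "(cmod (\<psi> j x))\<^sup>2 \<le> ((\<delta> * d) * phi d \<delta> j x)^2"
        by (intro power_mono pb0) simp
      also have "\<dots> = (\<delta> * d)^2 * phi d \<delta> j x"
        using phi_01[of d \<delta> j x] by (auto simp: power2_eq_square)
      finally show ?thesis .
    qed
    have "(LINT x|lborel. (cmod (\<psi> j x))\<^sup>2) \<le> (LINT x|lborel. (\<delta> * d)^2 * phi d \<delta> j x)"
      by (rule integral_mono[OF integrable_boxed_sq[OF pm pb] integrable_mult_right[OF integrable_phi] pt])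
    also have "\<dots> = (\<delta> * d)^3" using \<delta>1 d1 by (simp add: integral_phi power3_eq_cube power2_eq_square)
    finally show ?thesis .
  qed
  define I00 where "I00 m = L2_inner (u 0) (EE b m)" for m
  have I0: "L2_inner (u j) (EE b m) = cnj (WW m j) * I00 m" for j m
  proof -
    have "u j = (\<lambda>x. u 0 (x - real_of_int j * d))" unfolding u_def using phi_shift by auto
    then have "L2_inner (u j) (EE b m) = cnj (EE b m (real_of_int j * d)) * L2_inner (u 0) (EE b m)"
      using inner_shift[of "u 0" "real_of_int j * d" b m] by simp
    then show ?thesis by (simp add: EE_grid I00_def)
  qed
  have key: "L2_inner (ff d \<delta> L) (gabor_atom GG a b k m) = (\<Sum>j\<in>Jk k. complex_of_real (Vv j) * L2_inner (\<psi> j) (EE b m))" for m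
  proof -
    have pw: "(\<lambda>x. \<Sum>j\<in>Jk k. complex_of_real (Vv j) * complex_of_real (phi d \<delta> j x * B2 (x - a * real_of_int k)))
        = (\<lambda>x. (\<Sum>j\<in>Jk k. cm j * u j x) + (\<Sum>j\<in>Jk k. complex_of_real (Vv j) * \<psi> j x))"
      by (rule ext, subst sum.distrib[symmetric], rule sum.cong[OF refl])
         (simp add: cm_def u_def \<psi>_def algebra_simps)
    have "L2_inner (ff d \<delta> L) (gabor_atom GG a b k m)
        = L2_inner (\<lambda>x. \<Sum>j\<in>Jk k. cm j * u j x) (EE b m) + L2_inner (\<lambda>x. \<Sum>j\<in>Jk k. complex_of_real (Vv j) * \<psi> j x) (EE b m)"
      unfolding inner_eq pw
      by (rule inner_add; rule int_sum_box[OF Jk_fin, where K=1 and lo="\<lambda>j. real_of_int j * d" and hi="\<lambda>j. real_of_int j * d + 1/2"]) (use um ub pm pb in auto)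
    also have "L2_inner (\<lambda>x. \<Sum>j\<in>Jk k. cm j * u j x) (EE b m) = (\<Sum>j\<in>Jk k. cm j * L2_inner (u j) (EE b m))"
      by (rule inner_sum[OF Jk_fin, where K=1 and lo="\<lambda>j. real_of_int j * d" and hi="\<lambda>j. real_of_int j * d + 1/2"])
         (use um ub in auto)
    also have "\<dots> = (\<Sum>j\<in>Jk k. cm j * cnj (WW m j)) * I00 m"
      unfolding I0 sum_distrib_right by (simp only: mult.assoc)
    also have "(\<Sum>j\<in>Jk k. cm j * cnj (WW m j)) = cnj (\<Sum>j\<in>Jk k. complex_of_real (Vv j * B2 (real_of_int (j - 5*k) * d)) * WW m j)"
      unfolding cm_def by simp
    also have "cnj (\<Sum>j\<in>Jk k. complex_of_real (Vv j * B2 (real_of_int (j - 5*k) * d)) * WW m j) = 0"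
      unfolding J using main_vanish[OF k1] by simp
    also have "L2_inner (\<lambda>x. \<Sum>j\<in>Jk k. complex_of_real (Vv j) * \<psi> j x) (EE b m) = (\<Sum>j\<in>Jk k. complex_of_real (Vv j) * L2_inner (\<psi> j) (EE b m))"
      by (rule inner_sum[OF Jk_fin, where K=1 and lo="\<lambda>j. real_of_int j * d" and hi="\<lambda>j. real_of_int j * d + 1/2"])
         (use pm pb in auto)
    finally show ?thesis by simp
  qed
  have "(\<Sum>m\<in>M. (cmod (L2_inner (ff d \<delta> L) (gabor_atom GG a b k m)))\<^sup>2)
      = (\<Sum>m\<in>M. (cmod (\<Sum>j\<in>Jk k. complex_of_real (Vv j) * L2_inner (\<psi> j) (EE b m)))\<^sup>2)"
    by (simp add: key)
  also have "\<dots> \<le> 25 * real (card (Jk k)) * real (card (Jk k)) * (4 * B * ((\<delta> * d)^3))"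
    by (rule bump_sum_bound[OF a_pos a_half B UB Vv_bound pm pb psq M])
  also have "\<dots> \<le> 25 * 33 * 33 * (4 * B * ((\<delta> * d)^3))"
    by (rule card_bound) (use B \<delta>1 d1 in simp)
  finally show ?thesis .
qed

lemma outside_zero:
  assumes "k < -3 \<or> k > int L + 3"
  shows "L2_inner (ff d \<delta> L) (gabor_atom GG a b k m) = 0"
proof -
  have "Jk k = {}" unfolding Jk_def using assms by auto
  then show ?thesis unfolding inner_eq by (simp add: L2_inner_def)
qed

lemma per_k_bound:
  assumes M: "finite M"
  shows "(\<Sum>m\<in>M. (cmod (L2_inner (ff d \<delta> L) (gabor_atom GG a b k m)))\<^sup>2)
     \<le> (if k < -3 \<or> k > int L + 3 then 0
         else if 16 \<le> 5*k \<and> 5*k+16 < 5 * int L then 108900 * B * (\<delta> * d)^3 else 108900 * B * (\<delta> * d))"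
proof -
  consider "k < -3 \<or> k > int L + 3" | "\<not> (k < -3 \<or> k > int L + 3)" "16 \<le> 5*k \<and> 5*k+16 < 5 * int L"
    | "\<not> (k < -3 \<or> k > int L + 3)" "\<not> (16 \<le> 5*k \<and> 5*k+16 < 5 * int L)" by blast
  then show ?thesis
  proof cases
    case 1 then show ?thesis using outside_zero[OF 1] by simp
  next
    case 2 then show ?thesis using interior_bound[OF M] by (simp add: mult.assoc)
  next
    case 3 then show ?thesis using general_bound[OF M, of k] by (auto simp: mult.assoc)
  qed
qed

lemma final_bound:
  assumes S: "finite S"
  shows "(\<Sum>j\<in>S. (cmod (L2_inner (ff d \<delta> L) ((\<lambda>(k::int,m::int). gabor_atom GG a b k m) j)))\<^sup>2)
     \<le> real (L + 7) * (108900 * B * (\<delta> * d)^3) + 14 * (108900 * B * (\<delta> * d))"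
proof -
  define F where "F j = (cmod (L2_inner (ff d \<delta> L) ((\<lambda>(k::int,m::int). gabor_atom GG a b k m) j)))\<^sup>2" for j
  define K where "K = fst ` S"
  define M where "M = snd ` S"
  define P where "P k = (if k < -3 \<or> k > int L + 3 then 0
         else if 16 \<le> 5*k \<and> 5*k+16 < 5 * int L then 108900 * B * (\<delta> * d)^3 else 108900 * B * (\<delta> * d))" for k
  define R where "R = {-3..int L + 3}"
  define Bd where "Bd = {-3..3} \<union> {int L - 3..int L + 3}"
  have fK: "finite K" "finite M" using S by (auto simp: K_def M_def)
  have P0: "0 \<le> P k" for k using B \<delta>1 d1 by (simp add: P_def)
  have "sum F S \<le> sum F (K \<times> M)"
    by (rule sum_mono2) (use fK in \<open>auto simp: K_def M_def F_def intro: rev_image_eqI\<close>)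
  also have "\<dots> = (\<Sum>k\<in>K. \<Sum>m\<in>M. F (k, m))" unfolding sum.cartesian_product by (simp add: case_prod_unfold)
  also have "\<dots> \<le> (\<Sum>k\<in>K. P k)"
    by (intro sum_mono) (use per_k_bound[OF fK(2)] in \<open>simp add: F_def P_def\<close>)
  also have "\<dots> = (\<Sum>k\<in>K \<inter> R. P k)"
    by (rule sum.mono_neutral_right) (use fK in \<open>auto simp: P_def R_def\<close>)
  also have "\<dots> \<le> (\<Sum>k\<in>R. P k)"
    by (rule sum_mono2) (use P0 in \<open>auto simp: R_def\<close>)
  also have "\<dots> \<le> (\<Sum>k\<in>R. 108900 * B * (\<delta> * d)^3 + 108900 * B * (\<delta> * d) * indicator Bd k)"
  proof (rule sum_mono)
    fix k assume k: "k \<in> R"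
    have X: "0 \<le> 108900 * B * (\<delta> * d)^3" "0 \<le> 108900 * B * (\<delta> * d)" using B \<delta>1 d1 by auto
    show "P k \<le> 108900 * B * (\<delta> * d)^3 + 108900 * B * (\<delta> * d) * indicator Bd k"
    proof (cases "16 \<le> 5*k \<and> 5*k+16 < 5 * int L")
      case True then show ?thesis using k X by (simp add: P_def R_def)
    next
      case False
      then have "k \<in> Bd" using k by (auto simp: Bd_def R_def)
      then show ?thesis using k X False by (simp add: P_def R_def)
    qed
  qed
  also have "\<dots> = real (card R) * (108900 * B * (\<delta> * d)^3) + 108900 * B * (\<delta> * d) * real (card (R \<inter> Bd))"
  proof -
    have ind: "(\<Sum>k\<in>R. indicator Bd k :: real) = real (card (R \<inter> Bd))"
    proof -
      have "(\<Sum>k\<in>R. indicator Bd k :: real) = (\<Sum>k\<in>R. (if k \<in> Bd then 1 else 0))"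
        by (intro sum.cong refl) (simp add: indicator_def)
      also have "\<dots> = real (card (R \<inter> Bd))" by (simp add: sum.If_cases R_def)
      finally show ?thesis .
    qed
    show ?thesis by (simp add: sum.distrib sum_distrib_left[symmetric] ind)
  qed
  also have "\<dots> \<le> real (L + 7) * (108900 * B * (\<delta> * d)^3) + 14 * (108900 * B * (\<delta> * d))"
  proof -
    have "card R = L + 7" unfolding R_def by simp
    moreover have "card (R \<inter> Bd) \<le> 14"
    proof -
      have "card (R \<inter> Bd) \<le> card Bd" by (rule card_mono) (auto simp: Bd_def)
      also have "\<dots> \<le> card {-3..3::int} + card {int L - 3..int L + 3}" unfolding Bd_def by (rule card_Un_le)
      also have "\<dots> = 14" by simp
      finally show ?thesis .
    qed
    then have "real (card (R \<inter> Bd)) \<le> 14" by simp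
    then have "108900 * B * (\<delta> * d) * real (card (R \<inter> Bd)) \<le> 108900 * B * (\<delta> * d) * 14"
      using B \<delta>1 d1 by (intro mult_left_mono) auto
    ultimately show ?thesis by simp
  qed
  finally show ?thesis unfolding F_def .
qed

end


theorem theorem3p7:
  fixes a b :: real
  assumes "a > 0" and "b > 0" and "a * b = 5 / 6"
    and "b \<in> {7/3 .. 8/3}"
  shows "\<not> gabor_frame (\<lambda>x. complex_of_real (B2 x)) a b"
proof
  assume fr: "gabor_frame (\<lambda>x. complex_of_real (B2 x)) a b"
  then obtain A B where AB: "0 < A" "A \<le> B"
    and fb: "\<forall>f\<in>L2. (\<lambda>j. (cmod (L2_inner f ((\<lambda>(k::int,m::int). gabor_atom GG a b k m) j)))\<^sup>2) summable_on UNIV \<and>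
        A * L2_norm_sq f \<le> (\<Sum>\<^sub>\<infinity>j. (cmod (L2_inner f ((\<lambda>(k::int,m::int). gabor_atom GG a b k m) j)))\<^sup>2) \<and>
        (\<Sum>\<^sub>\<infinity>j. (cmod (L2_inner f ((\<lambda>(k::int,m::int). gabor_atom GG a b k m) j)))\<^sup>2) \<le> B * L2_norm_sq f"
    unfolding gabor_frame_def is_frame_def by blast
  have B0: "0 \<le> B" using AB by simp
  have UB: "\<And>f. f \<in> L2 \<Longrightarrow> (\<lambda>j. (cmod (L2_inner f ((\<lambda>(k::int,m::int). gabor_atom GG a b k m) j)))\<^sup>2) summable_on UNIV \<and>
      (\<Sum>\<^sub>\<infinity>j. (cmod (L2_inner f ((\<lambda>(k::int,m::int). gabor_atom GG a b k m) j)))\<^sup>2) \<le> B * L2_norm_sq f"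
    using fb by blast
  define d where "d = a / 5"
  have a5: "a = 5 * d" unfolding d_def by simp
  have bd: "b * d = 1/6" using assms(3) unfolding d_def by (simp add: field_simps)
  have dd: "d = 1 / (6 * b)" using bd assms(2) by (simp add: field_simps)
  have d1: "1/16 \<le> d" unfolding dd using assms(2,4) by (simp add: divide_simps)
  have d2: "d \<le> 1/14" unfolding dd using assms(2,4) by (simp add: divide_simps)
  define C where "C = 108900 * B"
  have C0: "0 \<le> C" using B0 by (simp add: C_def)
  define \<delta> where "\<delta> = min (1/2) (34 * A / (C + 1))"
  have \<delta>1: "0 < \<delta>" using AB C0 by (simp add: \<delta>_def)
  have \<delta>2: "\<delta> \<le> 1/2" by (simp add: \<delta>_def)
  define t where "t = \<delta> * d"
  have t0: "0 < t" using \<delta>1 d1 by (simp add: t_def)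
  have t1: "t \<le> \<delta>"
  proof -
    have "\<delta> * d \<le> \<delta> * 1" using \<delta>1 d2 by (intro mult_left_mono) auto
    then show ?thesis by (simp add: t_def)
  qed
  have Ct: "C * t^2 \<le> 34 * A"
  proof -
    have "t^2 \<le> t" using t0 t1 \<delta>2 by (simp add: power2_eq_square mult_le_cancel_left1) 
    also have "\<dots> \<le> 34 * A / (C + 1)" using t1 by (simp add: \<delta>_def)
    finally have "C * t^2 \<le> C * (34 * A / (C + 1))" using C0 by (intro mult_left_mono) auto
    also have "\<dots> \<le> 34 * A"
    proof -
      have "C * (34 * A) \<le> (C + 1) * (34 * A)" using AB by (intro mult_right_mono) auto
      then show ?thesis using C0 by (simp add: divide_simps mult_ac)
    qed
    finally show ?thesis .
  qed
  obtain L :: nat where L: "7 + 14 * C / (34 * A) < real L" using reals_Archimedean2 by blast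
  have fL2: "ff d \<delta> L \<in> L2" and nrm: "L2_norm_sq (ff d \<delta> L) = 68 * real L * t"
    using ff_L2[of d \<delta> L] d1 \<delta>1 \<delta>2 by (auto simp: t_def)
  have low: "A * (68 * real L * t) \<le> (\<Sum>\<^sub>\<infinity>j. (cmod (L2_inner (ff d \<delta> L) ((\<lambda>(k::int,m::int). gabor_atom GG a b k m) j)))\<^sup>2)"
    using fb fL2 nrm by auto
  have up: "(\<Sum>\<^sub>\<infinity>j. (cmod (L2_inner (ff d \<delta> L) ((\<lambda>(k::int,m::int). gabor_atom GG a b k m) j)))\<^sup>2)
      \<le> real (L + 7) * (C * t^3) + 14 * (C * t)"
    by (rule infsum_le_finite_sums)
       (use fb fL2 final_bound[OF a5 bd d1 d2 \<delta>1 \<delta>2 B0 UB] in \<open>auto simp: C_def t_def\<close>)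
  have "A * (68 * real L * t) \<le> real (L + 7) * (C * t^3) + 14 * (C * t)" using low up by linarith
  then have "(68 * A * real L) * t \<le> (real (L + 7) * (C * t^2) + 14 * C) * t"
    by (simp add: algebra_simps power2_eq_square power3_eq_cube)
  then have h1: "68 * A * real L \<le> real (L + 7) * (C * t^2) + 14 * C" using t0 by simp
  have "real (L + 7) * (C * t^2) \<le> real (L + 7) * (34 * A)" using Ct by (intro mult_left_mono) auto
  with h1 have h2: "34 * A * real L \<le> 238 * A + 14 * C" by (simp add: algebra_simps)
  have "34 * A * (7 + 14 * C / (34 * A)) < 34 * A * real L" using L AB by (intro mult_strict_left_mono) auto
  then have "238 * A + 14 * C < 34 * A * real L" using AB by (simp add: algebra_simps)
  with h2 show False by linarith
qed


end
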